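(* Let $r,s$ be real numbers with $s > 3\sqrt{3}\, r > 0$, and let $C_{r,s} \subset \mathbb{P}^2$ be the projective closure of the curve $s(xy - r^2) = x^2 y + x y^2$, i.e. $s(xyz - r^2 z^3) = x^2 y + x y^2$ in coordinates $[x,y,z]$; this is a nonsingular cubic. Equip its set of real points with the group law in which the identity is $[1,-1,0]$ and, for points $P,Q$, the sum $P+Q$ is the reflection in the line $y=x$ (i.e. $[x,y,z]\mapsto[y,x,z]$) of the third intersection point of $C_{r,s}$ with the line through $P$ and $Q$ (the tangent line if $P=Q$). Call a real point of $C_{r,s}$ a triangle point if it is an affine point $(x,y)$ with $x>0$ and $y>0$. Then the sum of two triangle points is not a triangle point, and the sum of a triangle point with a real point that is not a triangle point is a triangle point. Consequently, the sum of an odd number of triangle points is a triangle point, and the sum of an even number of triangle points is not a triangle point.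
   Context: The chord–tangent construction described (third intersection point followed by reflection in $y=x$, identity $[1,-1,0]$) defines the abelian group structure on the real points of $C_{r,s}$ used here. *)

theory Defs
  imports Complex_Main
begin

text \<open>Points of the real projective plane are represented by nonzero real triples
  (x,y,z) (homogeneous coordinates); all notions below are invariant under
  scaling by a nonzero real.\<close>

type_synonym pt = "real \<times> real \<times> real"

definition pscale :: "real \<Rightarrow> pt \<Rightarrow> pt" where
  "pscale c p = (case p of (x,y,z) \<Rightarrow> (c*x, c*y, c*z))"

definition padd :: "pt \<Rightarrow> pt \<Rightarrow> pt" where
  "padd p q = (case p of (x1,y1,z1) \<Rightarrow> case q of (x2,y2,z2) \<Rightarrow> (x1+x2, y1+y2, z1+z2))"

definition cross :: "pt \<Rightarrow> pt \<Rightarrow> pt" where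
  "cross p q = (case p of (x1,y1,z1) \<Rightarrow> case q of (x2,y2,z2) \<Rightarrow>
      (y1*z2 - z1*y2, z1*x2 - x1*z2, x1*y2 - y1*x2))"

definition cubicF :: "real \<Rightarrow> real \<Rightarrow> pt \<Rightarrow> real" where
  "cubicF r s p = (case p of (x,y,z) \<Rightarrow> s*(x*y*z - r^2*z^3) - (x^2*y + x*y^2))"

definition on_curve :: "real \<Rightarrow> real \<Rightarrow> pt \<Rightarrow> bool" where
  "on_curve r s p \<longleftrightarrow> p \<noteq> (0,0,0) \<and> cubicF r s p = 0"

text \<open>R is the third intersection point of C with the line through P and Q
  (the tangent line at P if P = Q): there is a line, spanned by independent
  vectors u, v, containing P, Q, R, such that the restriction of the cubic to the
  line, as a binary cubic form in the line coordinates (a,b), is a nonzero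
  multiple of the product of the linear forms vanishing at P, Q, R.  Thus the
  intersection divisor of the line with C is P + Q + R (with multiplicities).\<close>
definition third_point :: "real \<Rightarrow> real \<Rightarrow> pt \<Rightarrow> pt \<Rightarrow> pt \<Rightarrow> bool" where
  "third_point r s P Q R \<longleftrightarrow>
     (\<exists>u v lam a1 b1 a2 b2 a3 b3.
        cross u v \<noteq> (0,0,0) \<and> lam \<noteq> 0 \<and>
        (a1,b1) \<noteq> (0,0) \<and> (a2,b2) \<noteq> (0,0) \<and> (a3,b3) \<noteq> (0,0) \<and>
        P = padd (pscale a1 u) (pscale b1 v) \<and>
        Q = padd (pscale a2 u) (pscale b2 v) \<and>
        R = padd (pscale a3 u) (pscale b3 v) \<and>
        (\<forall>a b. cubicF r s (padd (pscale a u) (pscale b v)) =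
                lam * (b1*a - a1*b) * (b2*a - a2*b) * (b3*a - a3*b)))"

definition swap_xy :: "pt \<Rightarrow> pt" where
  "swap_xy p = (case p of (x,y,z) \<Rightarrow> (y,x,z))"

definition cadd :: "real \<Rightarrow> real \<Rightarrow> pt \<Rightarrow> pt \<Rightarrow> pt" where
  "cadd r s P Q = swap_xy (SOME R. third_point r s P Q R)"

definition czero :: pt where
  "czero = (1, -1, 0)"

definition csum :: "real \<Rightarrow> real \<Rightarrow> pt list \<Rightarrow> pt" where
  "csum r s Ps = foldr (cadd r s) Ps czero"

definition triangle_pt :: "real \<Rightarrow> real \<Rightarrow> pt \<Rightarrow> bool" where
  "triangle_pt r s p \<longleftrightarrow> on_curve r s p \<and>
     (case p of (x,y,z) \<Rightarrow> z \<noteq> 0 \<and> x/z > 0 \<and> y/z > 0)"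

end

theory Submission
  imports Defs
begin

definition grad :: "real \<Rightarrow> real \<Rightarrow> pt \<Rightarrow> pt" where
  "grad r s p = (case p of (x,y,z) \<Rightarrow>
     (s*y*z - 2*x*y - y^2, s*x*z - x^2 - 2*x*y, s*x*y - 3*s*r^2*z^2))"

definition dot :: "pt \<Rightarrow> pt \<Rightarrow> real" where
  "dot p q = (case p of (x1,y1,z1) \<Rightarrow> case q of (x2,y2,z2) \<Rightarrow> x1*x2+y1*y2+z1*z2)"

definition pol :: "real \<Rightarrow> real \<Rightarrow> pt \<Rightarrow> pt \<Rightarrow> real" where
  "pol r s A B = dot (grad r s A) B"

definition sg :: "real \<Rightarrow> pt \<Rightarrow> real" where
  "sg s p = (case p of (x,y,z) \<Rightarrow> (x+y)*(x+y-s*z))"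

definition det3 :: "pt \<Rightarrow> pt \<Rightarrow> pt \<Rightarrow> real" where
  "det3 p q w = (case p of (p1,p2,p3) \<Rightarrow> case q of (q1,q2,q3) \<Rightarrow> case w of (w1,w2,w3) \<Rightarrow>
     p1*(q2*w3 - q3*w2) - p2*(q1*w3 - q3*w1) + p3*(q1*w2 - q2*w1))"

lemma expand3:
  "cubicF r s (al*p1+be*q1, al*p2+be*q2, al*p3+be*q3) =
     al^3 * cubicF r s (p1,p2,p3) + al^2*be*pol r s (p1,p2,p3) (q1,q2,q3)
     + al*be^2 * pol r s (q1,q2,q3) (p1,p2,p3) + be^3 * cubicF r s (q1,q2,q3)"
  unfolding cubicF_def pol_def grad_def dot_def
  by (simp add: power2_eq_square power3_eq_cube algebra_simps)

lemma expand_pol: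
  "pol r s (al*p1+be*q1, al*p2+be*q2, al*p3+be*q3) (p1,p2,p3) =
     3*al^2 * cubicF r s (p1,p2,p3) + 2*al*be*pol r s (p1,p2,p3) (q1,q2,q3)
     + be^2 * pol r s (q1,q2,q3) (p1,p2,p3)"
  unfolding cubicF_def pol_def grad_def dot_def
  by (simp add: power2_eq_square power3_eq_cube algebra_simps)

lemma cubic_anti: "cubicF r s (x, -x, w) = -s*w*(x^2 + r^2*w^2)"
  unfolding cubicF_def by (simp add: power2_eq_square power3_eq_cube algebra_simps)

lemma cubic_tan: "x + y = s*w \<Longrightarrow> cubicF r s (x,y,w) = -s*r^2*w^3"
proof -
  assume h: "x + y = s*w"
  have "cubicF r s (x,y,w) = s*x*y*w - s*r^2*w^3 - x*y*(x+y)"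
    unfolding cubicF_def by (simp add: power2_eq_square power3_eq_cube algebra_simps)
  also have "\<dots> = -s*r^2*w^3" using h by (simp add: algebra_simps)
  finally show ?thesis .
qed

lemma cubic_norm: "z \<noteq> 0 \<Longrightarrow> cubicF r s (x,y,z) = z^3 * cubicF r s (x/z,y/z,1)"
  unfolding cubicF_def by (simp add: power2_eq_square power3_eq_cube field_simps)

lemma cubic_swap: "cubicF r s (swap_xy p) = cubicF r s p"
  unfolding cubicF_def swap_xy_def by (cases p) (simp add: power2_eq_square algebra_simps)


lemma cubic1: "cubicF r s (a,b,1) = s*(a*b - r^2) - a*b*(a+b)"
  unfolding cubicF_def by (simp add: power2_eq_square algebra_simps)

lemma tri_facts:
  assumes r: "r > 0" and s: "s > 0" and t: "triangle_pt r s (x,y,z)"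
  shows "z \<noteq> 0 \<and> x*z > 0 \<and> y*z > 0 \<and> (x+y-s*z)*z < 0"
proof -
  from t have oc: "cubicF r s (x,y,z) = 0" and z: "z \<noteq> 0" and a0: "x/z > 0" and b0: "y/z > 0"
    by (auto simp: triangle_pt_def on_curve_def)
  define a where "a = x/z"
  define b where "b = y/z"
  have a: "a > 0" and b: "b > 0" using a0 b0 by (simp_all add: a_def b_def)
  have xa: "x = a*z" and yb: "y = b*z" using z by (auto simp: a_def b_def)
  have "cubicF r s (a,b,1) = 0" using cubic_norm[OF z, of r s x y] oc z by (simp add: a_def b_def)
  hence e: "a*b*(s-a-b) = s*r^2" by (simp add: cubic1 algebra_simps)
  have ab: "a*b > 0" using a b by (rule mult_pos_pos)
  have "s*r^2 > 0" using r s by simp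
  hence sab: "s - a - b > 0" using e ab by (metis zero_less_mult_pos)
  have zz: "z*z > 0" using z by (metis not_real_square_gt_zero)
  have "(a+b-s)*(z*z) < 0" using sab zz by (simp add: mult_neg_pos)
  moreover have "a*(z*z) > 0" "b*(z*z) > 0" using a b zz by simp_all
  ultimately show ?thesis using z by (simp add: xa yb algebra_simps)
qed


lemma sg_neg:
  assumes r: "r > 0" and s: "s > 0" and t: "triangle_pt r s P"
  shows "sg s P < 0"
proof -
  obtain x y z where P: "P = (x,y,z)" by (cases P) auto
  from tri_facts[OF r s t[unfolded P]] have z: "z \<noteq> 0" and h1: "(x+y)*z > 0" and h2: "(x+y-s*z)*z < 0"
    by (auto simp: algebra_simps)
  have "((x+y)*z)*((x+y-s*z)*z) < 0" using h1 h2 by (simp add: mult_pos_neg)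
  hence "sg s P * (z*z) < 0" by (simp add: P sg_def algebra_simps)
  moreover have "z*z > 0" using z by (metis not_real_square_gt_zero)
  ultimately show ?thesis by (simp add: mult_less_0_iff)
qed

lemma sg_tri:
  assumes r: "r > 0" and s: "s > 0" and oc: "on_curve r s P" and neg: "sg s P < 0"
  shows "triangle_pt r s P"
proof -
  obtain x y z where P: "P = (x,y,z)" by (cases P) auto
  have F: "cubicF r s (x,y,z) = 0" using oc by (simp add: P on_curve_def)
  have z: "z \<noteq> 0"
  proof
    assume "z = 0"
    hence "sg s P = (x+y)^2" by (simp add: P sg_def power2_eq_square)
    thus False using neg by simp
  qed
  define a where "a = x/z"
  define b where "b = y/z"
  have xa: "x = a*z" and yb: "y = b*z" using z by (auto simp: a_def b_def)
  have "cubicF r s (a,b,1) = 0" using cubic_norm[OF z, of r s x y] F z by (simp add: a_def b_def)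
  hence e: "a*b*(s-a-b) = s*r^2" by (simp add: cubic1 algebra_simps)
  have zz: "z*z > 0" using z by (metis not_real_square_gt_zero)
  have "sg s P = (a+b)*(a+b-s)*(z*z)" by (simp add: P sg_def xa yb algebra_simps)
  hence "(a+b)*(a+b-s) < 0" using neg zz by (simp add: mult_less_0_iff)
  hence ab1: "a+b > 0" and ab2: "s - a - b > 0" using s by (auto simp: mult_less_0_iff)
  have "s*r^2 > 0" using r s by simp
  hence "a*b > 0" using e ab2 by (metis zero_less_mult_pos2)
  hence "a > 0 \<and> b > 0" using ab1 by (auto simp: zero_less_mult_iff)
  thus ?thesis using oc z by (simp add: triangle_pt_def P a_def b_def)
qed

lemma sg_zero:
  assumes r: "r > 0" and s: "s > 0" and oc: "on_curve r s (x,y,z)" and zero: "sg s (x,y,z) = 0"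
  shows "z = 0 \<and> x + y = 0"
proof (cases "z = 0")
  case True
  thus ?thesis using zero by (simp add: sg_def)
next
  case False
  note z = False
  have F: "cubicF r s (x,y,z) = 0" using oc by (simp add: on_curve_def)
  define a where "a = x/z"
  define b where "b = y/z"
  have xa: "x = a*z" and yb: "y = b*z" using z by (auto simp: a_def b_def)
  have "cubicF r s (a,b,1) = 0" using cubic_norm[OF z, of r s x y] F z by (simp add: a_def b_def)
  hence e: "s*(a*b - r^2) = a*b*(a+b)" by (simp add: cubic1 algebra_simps)
  have zz: "z*z > 0" using z by (metis not_real_square_gt_zero)
  have "sg s (x,y,z) = (a+b)*(a+b-s)*(z*z)" by (simp add: sg_def xa yb algebra_simps)
  hence "(a+b)*(a+b-s) = 0" using zero zz z by simp
  hence "b = -a \<or> a + b = s" by auto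
  thus ?thesis
  proof
    assume "b = -a"
    hence "s*(a*a + r^2) = 0" using e by (simp add: algebra_simps)
    moreover have "a*a + r^2 > 0" using r by (simp add: add_nonneg_pos)
    ultimately show ?thesis using s by simp
  next
    assume "a + b = s"
    hence "s*r^2 = 0" using e by (simp add: algebra_simps)
    thus ?thesis using r s by simp
  qed
qed

lemma sg_nonneg:
  assumes r: "r > 0" and s: "s > 0" and oc: "on_curve r s P" and nt: "\<not> triangle_pt r s P"
  shows "sg s P \<ge> 0"
  using sg_tri[OF r s oc] nt by force


lemma tp_obtain:
  assumes "third_point r s P Q R"
  obtains u1 u2 u3 v1 v2 v3 lam a1 b1 a2 b2 a3 b3 where
    "cross (u1,u2,u3) (v1,v2,v3) \<noteq> (0,0,0)" "lam \<noteq> 0"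
    "(a1,b1) \<noteq> (0,0)" "(a2,b2) \<noteq> (0,0)" "(a3,b3) \<noteq> (0,0)"
    "P = (a1*u1+b1*v1, a1*u2+b1*v2, a1*u3+b1*v3)"
    "Q = (a2*u1+b2*v1, a2*u2+b2*v2, a2*u3+b2*v3)"
    "R = (a3*u1+b3*v1, a3*u2+b3*v2, a3*u3+b3*v3)"
    "\<And>a b. cubicF r s (a*u1+b*v1, a*u2+b*v2, a*u3+b*v3) =
                lam * (b1*a - a1*b) * (b2*a - a2*b) * (b3*a - a3*b)"
proof -
  from assms obtain u v lam a1 b1 a2 b2 a3 b3 where h:
        "cross u v \<noteq> (0,0,0) \<and> lam \<noteq> 0 \<and>
        (a1,b1) \<noteq> (0,0) \<and> (a2,b2) \<noteq> (0,0) \<and> (a3,b3) \<noteq> (0,0) \<and>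
        P = padd (pscale a1 u) (pscale b1 v) \<and>
        Q = padd (pscale a2 u) (pscale b2 v) \<and>
        R = padd (pscale a3 u) (pscale b3 v) \<and>
        (\<forall>a b. cubicF r s (padd (pscale a u) (pscale b v)) =
                lam * (b1*a - a1*b) * (b2*a - a2*b) * (b3*a - a3*b))"
    unfolding third_point_def by blast
  obtain u1 u2 u3 where u: "u = (u1,u2,u3)" by (cases u) auto
  obtain v1 v2 v3 where v: "v = (v1,v2,v3)" by (cases v) auto
  show ?thesis
    apply (rule that[of u1 u2 u3 v1 v2 v3 lam a1 b1 a2 b2 a3 b3])
    using h by (simp_all add: u v padd_def pscale_def)
qed

lemma tp_sg:
  assumes "third_point r s P Q R"
  shows "sg s P * sg s Q * sg s R \<ge> 0"
proof -
  obtain u1 u2 u3 v1 v2 v3 lam a1 b1 a2 b2 a3 b3 where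
    lam: "lam \<noteq> 0" and
    P: "P = (a1*u1+b1*v1, a1*u2+b1*v2, a1*u3+b1*v3)" and
    Q: "Q = (a2*u1+b2*v1, a2*u2+b2*v2, a2*u3+b2*v3)" and
    R: "R = (a3*u1+b3*v1, a3*u2+b3*v2, a3*u3+b3*v3)" and
    id: "\<And>a b. cubicF r s (a*u1+b*v1, a*u2+b*v2, a*u3+b*v3) =
                lam * (b1*a - a1*b) * (b2*a - a2*b) * (b3*a - a3*b)"
    using tp_obtain[OF assms] by metis
  define mu where "mu = u1+u2"
  define mv where "mv = v1+v2"
  define tu where "tu = mu - s*u3"
  define tv where "tv = mv - s*v3"
  define X where "X = mv*u1 + (-mu)*v1"
  define W where "W = mv*u3 + (-mu)*v3"
  have e2: "mv*u2 + (-mu)*v2 = -X" by (simp add: X_def mu_def mv_def algebra_simps)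
  have pt: "(mv*u1 + (-mu)*v1, mv*u2 + (-mu)*v2, mv*u3 + (-mu)*v3) = (X, -X, W)"
    using e2 by (simp add: X_def W_def)
  have "cubicF r s (X,-X,W) = lam * (b1*mv - a1*(-mu)) * (b2*mv - a2*(-mu)) * (b3*mv - a3*(-mu))"
    using id[of mv "-mu"] unfolding pt .
  hence i1: "lam * (b1*mv + a1*mu) * (b2*mv + a2*mu) * (b3*mv + a3*mu) = -s*W*(X^2 + r^2*W^2)"
    by (simp add: cubic_anti)
  have e3: "(tv*u1 + (-tu)*v1) + (tv*u2 + (-tu)*v2) = s*(tv*u3 + (-tu)*v3)"
    by (simp add: tu_def tv_def mu_def mv_def algebra_simps)
  have e4: "tv*u3 + (-tu)*v3 = W" by (simp add: tu_def tv_def W_def algebra_simps)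
  have "cubicF r s (tv*u1 + (-tu)*v1, tv*u2 + (-tu)*v2, tv*u3 + (-tu)*v3) = -s*r^2*W^3"
    using cubic_tan[OF e3, of r] by (simp only: e4)
  hence i2: "lam * (b1*tv + a1*tu) * (b2*tv + a2*tu) * (b3*tv + a3*tu) = -s*r^2*W^3"
    using id[of tv "-tu"] by simp
  have sP: "sg s P = (b1*mv + a1*mu) * (b1*tv + a1*tu)"
    by (simp add: P sg_def mu_def mv_def tu_def tv_def algebra_simps)
  have sQ: "sg s Q = (b2*mv + a2*mu) * (b2*tv + a2*tu)"
    by (simp add: Q sg_def mu_def mv_def tu_def tv_def algebra_simps)
  have sR: "sg s R = (b3*mv + a3*mu) * (b3*tv + a3*tu)"
    by (simp add: R sg_def mu_def mv_def tu_def tv_def algebra_simps)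
  have "(lam*lam) * (sg s P * sg s Q * sg s R) =
        (lam * (b1*mv + a1*mu) * (b2*mv + a2*mu) * (b3*mv + a3*mu)) *
        (lam * (b1*tv + a1*tu) * (b2*tv + a2*tu) * (b3*tv + a3*tu))"
    by (simp add: sP sQ sR algebra_simps)
  also have "\<dots> = (-s*W*(X^2 + r^2*W^2)) * (-s*r^2*W^3)"
    by (simp only: i1 i2)
  also have "\<dots> = s^2*r^2*W^4*(X^2 + r^2*W^2)"
    by (simp add: eval_nat_numeral algebra_simps)
  also have "\<dots> \<ge> 0" by simp
  finally have "(lam*lam) * (sg s P * sg s Q * sg s R) \<ge> 0" .
  moreover have "lam*lam > 0" using lam by (metis not_real_square_gt_zero)
  ultimately show ?thesis by (simp add: zero_le_mult_iff)
qed


lemma indep: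
  assumes c: "cross (u1,u2,u3) (v1,v2,v3) \<noteq> (0,0,0)"
    and h1: "a*u1+b*v1 = 0" and h2: "a*u2+b*v2 = 0" and h3: "a*u3+b*v3 = 0"
  shows "a = 0 \<and> b = 0"
proof -
  have b1: "b*(u2*v3 - u3*v2) = 0" and b2: "b*(u3*v1 - u1*v3) = 0" and b3: "b*(u1*v2 - u2*v1) = 0"
    and a1: "a*(u2*v3 - u3*v2) = 0" and a2: "a*(u3*v1 - u1*v3) = 0" and a3: "a*(u1*v2 - u2*v1) = 0"
  proof -
    have "b*(u2*v3 - u3*v2) = u2*(a*u3+b*v3) - u3*(a*u2+b*v2)" by (simp add: algebra_simps)
    thus "b*(u2*v3 - u3*v2) = 0" using h2 h3 by simp
    have "b*(u3*v1 - u1*v3) = u3*(a*u1+b*v1) - u1*(a*u3+b*v3)" by (simp add: algebra_simps)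
    thus "b*(u3*v1 - u1*v3) = 0" using h1 h3 by simp
    have "b*(u1*v2 - u2*v1) = u1*(a*u2+b*v2) - u2*(a*u1+b*v1)" by (simp add: algebra_simps)
    thus "b*(u1*v2 - u2*v1) = 0" using h1 h2 by simp
    have "a*(u2*v3 - u3*v2) = v3*(a*u2+b*v2) - v2*(a*u3+b*v3)" by (simp add: algebra_simps)
    thus "a*(u2*v3 - u3*v2) = 0" using h2 h3 by simp
    have "a*(u3*v1 - u1*v3) = v1*(a*u3+b*v3) - v3*(a*u1+b*v1)" by (simp add: algebra_simps)
    thus "a*(u3*v1 - u1*v3) = 0" using h1 h3 by simp
    have "a*(u1*v2 - u2*v1) = v2*(a*u1+b*v1) - v1*(a*u2+b*v2)" by (simp add: algebra_simps)
    thus "a*(u1*v2 - u2*v1) = 0" using h1 h2 by simp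
  qed
  from c have "u2*v3 - u3*v2 \<noteq> 0 \<or> u3*v1 - u1*v3 \<noteq> 0 \<or> u1*v2 - u2*v1 \<noteq> 0"
    by (auto simp: cross_def)
  thus ?thesis
  proof (elim disjE)
    assume "u2*v3 - u3*v2 \<noteq> 0" thus ?thesis using a1 b1 by (metis mult_eq_0_iff)
  next
    assume "u3*v1 - u1*v3 \<noteq> 0" thus ?thesis using a2 b2 by (metis mult_eq_0_iff)
  next
    assume "u1*v2 - u2*v1 \<noteq> 0" thus ?thesis using a3 b3 by (metis mult_eq_0_iff)
  qed
qed

lemma tp_oncurve:
  assumes "third_point r s P Q R"
  shows "on_curve r s R"
proof -
  obtain u1 u2 u3 v1 v2 v3 lam a1 b1 a2 b2 a3 b3 where
    c: "cross (u1,u2,u3) (v1,v2,v3) \<noteq> (0,0,0)" and ab3: "(a3,b3) \<noteq> (0,0)" and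
    R: "R = (a3*u1+b3*v1, a3*u2+b3*v2, a3*u3+b3*v3)" and
    id: "\<And>a b. cubicF r s (a*u1+b*v1, a*u2+b*v2, a*u3+b*v3) =
                lam * (b1*a - a1*b) * (b2*a - a2*b) * (b3*a - a3*b)"
    using tp_obtain[OF assms] by metis
  have "cubicF r s R = 0" using id[of a3 b3] by (simp add: R algebra_simps)
  moreover have "R \<noteq> (0,0,0)" using indep[OF c, of a3 b3] ab3 by (auto simp: R)
  ultimately show ?thesis by (simp add: on_curve_def)
qed

lemma tp_det:
  assumes "third_point r s P Q R"
  shows "det3 P Q R = 0"
proof -
  obtain u1 u2 u3 v1 v2 v3 lam a1 b1 a2 b2 a3 b3 where
    P: "P = (a1*u1+b1*v1, a1*u2+b1*v2, a1*u3+b1*v3)" and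
    Q: "Q = (a2*u1+b2*v1, a2*u2+b2*v2, a2*u3+b2*v3)" and
    R: "R = (a3*u1+b3*v1, a3*u2+b3*v2, a3*u3+b3*v3)"
    using tp_obtain[OF assms] by metis
  show ?thesis by (simp add: P Q R det3_def algebra_simps)
qed


lemma col_tri:
  assumes r: "r > 0" and s: "s > 0" and tP: "triangle_pt r s P" and oc: "on_curve r s X"
    and y: "y \<noteq> 0" and d: "det3 P (y,-y,0) X = 0"
  shows "(snd (snd X) = 0 \<and> fst X + fst (snd X) = 0) \<or> triangle_pt r s X"
proof -
  obtain p1 p2 p3 where P: "P = (p1,p2,p3)" by (cases P) auto
  obtain x1 x2 x3 where X: "X = (x1,x2,x3)" by (cases X) auto
  have tf: "p3 \<noteq> 0" "(p1+p2-s*p3)*p3 < 0" using tri_facts[OF r s tP[unfolded P]] by auto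
  have sP: "sg s P < 0" using sg_neg[OF r s tP] .
  have "y*(p3*(x1+x2) - (p1+p2)*x3) = 0" using d by (simp add: P X det3_def algebra_simps)
  hence e: "p3*(x1+x2) = (p1+p2)*x3" using y by simp
  show ?thesis
  proof (cases "x3 = 0")
    case True
    thus ?thesis using e tf by (simp add: X)
  next
    case False
    have "sg s X * (p3*p3) = (x3*x3) * sg s P"
    proof -
      have "sg s X * (p3*p3) = (p3*(x1+x2)) * (p3*(x1+x2) - s*x3*p3)"
        by (simp add: X sg_def algebra_simps)
      also have "\<dots> = ((p1+p2)*x3) * ((p1+p2)*x3 - s*x3*p3)" by (simp only: e)
      also have "\<dots> = (x3*x3) * sg s P" by (simp add: P sg_def algebra_simps)
      finally show ?thesis .
    qed
    moreover have "x3*x3 > 0" using False by (metis not_real_square_gt_zero)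
    moreover have "p3*p3 > 0" using tf by (metis not_real_square_gt_zero)
    ultimately have "sg s X < 0" using sP
      by (metis mult_pos_neg mult_neg_pos not_less_iff_gr_or_eq mult_less_0_iff)
    thus ?thesis using sg_tri[OF r s oc] by simp
  qed
qed

lemma diff_pm:
  "cubicF r s (q1+p1, q2+p2, q3+p3) - cubicF r s (q1-p1, q2-p2, q3-p3)
     = 2*cubicF r s (p1,p2,p3) + 2*pol r s (q1,q2,q3) (p1,p2,p3)"
  unfolding cubicF_def pol_def grad_def dot_def
  by (simp add: power2_eq_square power3_eq_cube algebra_simps)

lemma pol_O: "pol r s (q,-q,0) (p1,p2,p3) = q^2*(p1+p2-s*p3)"
  unfolding pol_def grad_def dot_def by (simp add: power2_eq_square algebra_simps)

lemma tp_OO: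
  assumes r: "r > 0" and s: "s > 0" and tp: "third_point r s P Q R" and tP: "triangle_pt r s P"
    and Q: "Q = (q,-q,0)" and q: "q \<noteq> 0" and R: "R = (w,-w,0)" and w: "w \<noteq> 0"
  shows False
proof -
  obtain u1 u2 u3 v1 v2 v3 lam a1 b1 a2 b2 a3 b3 where
    c: "cross (u1,u2,u3) (v1,v2,v3) \<noteq> (0,0,0)" and
    P: "P = (a1*u1+b1*v1, a1*u2+b1*v2, a1*u3+b1*v3)" and
    Q': "Q = (a2*u1+b2*v1, a2*u2+b2*v2, a2*u3+b2*v3)" and
    R': "R = (a3*u1+b3*v1, a3*u2+b3*v2, a3*u3+b3*v3)" and
    id: "\<And>a b. cubicF r s (a*u1+b*v1, a*u2+b*v2, a*u3+b*v3) =
                lam * (b1*a - a1*b) * (b2*a - a2*b) * (b3*a - a3*b)"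
    using tp_obtain[OF tp] by metis
  obtain p1 p2 p3 where Pc: "P = (p1,p2,p3)" by (cases P) auto
  have pe: "p1 = a1*u1+b1*v1" "p2 = a1*u2+b1*v2" "p3 = a1*u3+b1*v3" using P Pc by auto
  have qe: "q = a2*u1+b2*v1" "-q = a2*u2+b2*v2" "0 = a2*u3+b2*v3" using Q Q' by auto
  have we: "w = a3*u1+b3*v1" "-w = a3*u2+b3*v2" "0 = a3*u3+b3*v3" using R R' by auto
  define k where "k = w/q"
  have wk: "w = k*q" using q by (simp add: k_def)
  have "(a3 - k*a2)*u1 + (b3 - k*b2)*v1 = 0"
    using we(1) qe(1) wk by (simp add: algebra_simps)
  moreover have "(a3 - k*a2)*u2 + (b3 - k*b2)*v2 = 0"
  proof -
    have "(a3 - k*a2)*u2 + (b3 - k*b2)*v2 = (a3*u2+b3*v2) - k*(a2*u2+b2*v2)" by (simp add: algebra_simps)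
    also have "\<dots> = -w - k*(-q)" using we(2) qe(2) by simp
    finally show ?thesis using wk by simp
  qed
  moreover have "(a3 - k*a2)*u3 + (b3 - k*b2)*v3 = 0"
  proof -
    have "(a3 - k*a2)*u3 + (b3 - k*b2)*v3 = (a3*u3+b3*v3) - k*(a2*u3+b2*v3)" by (simp add: algebra_simps)
    thus ?thesis using we(3) qe(3) by simp
  qed
  ultimately have "a3 - k*a2 = 0 \<and> b3 - k*b2 = 0" using indep[OF c] by blast
  hence a3: "a3 = k*a2" and b3: "b3 = k*b2" by auto
  have pt1: "((a2+a1)*u1+(b2+b1)*v1, (a2+a1)*u2+(b2+b1)*v2, (a2+a1)*u3+(b2+b1)*v3) = (q+p1, -q+p2, 0+p3)"
    using pe qe by (simp add: algebra_simps)
  have pt2: "((a2-a1)*u1+(b2-b1)*v1, (a2-a1)*u2+(b2-b1)*v2, (a2-a1)*u3+(b2-b1)*v3) = (q-p1, -q-p2, 0-p3)"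
    using pe qe by (simp add: algebra_simps)
  have "cubicF r s (q+p1, -q+p2, 0+p3) = lam * (b1*(a2+a1) - a1*(b2+b1)) * (b2*(a2+a1) - a2*(b2+b1)) * (b3*(a2+a1) - a3*(b2+b1))"
    using id[of "a2+a1" "b2+b1"] unfolding pt1 .
  also have "\<dots> = lam * (b1*(a2-a1) - a1*(b2-b1)) * (b2*(a2-a1) - a2*(b2-b1)) * (b3*(a2-a1) - a3*(b2-b1))"
    by (simp add: a3 b3 algebra_simps)
  also have "\<dots> = cubicF r s (q-p1, -q-p2, 0-p3)"
    using id[of "a2-a1" "b2-b1"] unfolding pt2 by simp
  finally have "cubicF r s (q+p1, -q+p2, 0+p3) - cubicF r s (q-p1, -q-p2, 0-p3) = 0" by simp
  hence "2*cubicF r s (p1,p2,p3) + 2*pol r s (q,-q,0) (p1,p2,p3) = 0" by (simp only: diff_pm)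
  moreover have "cubicF r s (p1,p2,p3) = 0" using tP by (simp add: Pc triangle_pt_def on_curve_def)
  ultimately have "q^2*(p1+p2-s*p3) = 0" by (simp add: pol_O)
  moreover have "(p1+p2-s*p3)*p3 < 0" using tri_facts[OF r s tP[unfolded Pc]] by auto
  ultimately show False using q by auto
qed


lemma det3_swap23: "det3 P R Q = - det3 P Q R"
  by (cases P, cases Q, cases R) (simp add: det3_def algebra_simps)

lemma olike_form:
  assumes r: "r > 0" and s: "s > 0" and oc: "on_curve r s X" and z: "sg s X = 0"
  obtains w where "X = (w,-w,0)" "w \<noteq> 0"
proof -
  obtain x1 x2 x3 where X: "X = (x1,x2,x3)" by (cases X) auto
  have "x3 = 0 \<and> x1 + x2 = 0" using sg_zero[OF r s oc[unfolded X] z[unfolded X]] .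
  hence X': "X = (x1,-x1,0)" by (simp add: X eq_neg_iff_add_eq_0)
  hence "x1 \<noteq> 0" using oc by (auto simp: on_curve_def)
  thus ?thesis using that X' by blast
qed

lemma part1:
  assumes r: "r > 0" and s: "s > 0" and tP: "triangle_pt r s P" and tQ: "triangle_pt r s Q"
    and tp: "third_point r s P Q R"
  shows "\<not> triangle_pt r s R"
proof
  assume tR: "triangle_pt r s R"
  have "sg s P < 0" "sg s Q < 0" "sg s R < 0" using sg_neg[OF r s] tP tQ tR by auto
  hence "sg s P * sg s Q * sg s R < 0" by (simp add: mult_neg_neg mult_pos_neg)
  thus False using tp_sg[OF tp] by simp
qed

lemma part2:
  assumes r: "r > 0" and s: "s > 0" and tP: "triangle_pt r s P" and oQ: "on_curve r s Q"
    and nQ: "\<not> triangle_pt r s Q" and tp: "third_point r s P Q R"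
  shows "triangle_pt r s R"
proof -
  have sP: "sg s P < 0" using sg_neg[OF r s tP] .
  have sQ: "sg s Q \<ge> 0" using sg_nonneg[OF r s oQ nQ] .
  have oR: "on_curve r s R" using tp_oncurve[OF tp] .
  have dt: "det3 P Q R = 0" using tp_det[OF tp] .
  show ?thesis
  proof (cases "sg s Q = 0")
    case True
    then obtain q where Q: "Q = (q,-q,0)" and q: "q \<noteq> 0" using olike_form[OF r s oQ] by metis
    have "(snd (snd R) = 0 \<and> fst R + fst (snd R) = 0) \<or> triangle_pt r s R"
      using col_tri[OF r s tP oR q] dt Q by simp
    thus ?thesis
    proof
      assume h: "snd (snd R) = 0 \<and> fst R + fst (snd R) = 0"
      hence "sg s R = 0" by (cases R) (simp add: sg_def)
      then obtain w where R: "R = (w,-w,0)" and w: "w \<noteq> 0" using olike_form[OF r s oR] by metis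
      show ?thesis using tp_OO[OF r s tp tP Q q R w] ..
    qed
  next
    case False
    hence sQ': "sg s Q > 0" using sQ by simp
    have "sg s P * sg s Q < 0" using sP sQ' by (simp add: mult_neg_pos)
    hence "sg s R \<le> 0" using tp_sg[OF tp] by (metis mult_neg_pos not_le)
    show ?thesis
    proof (cases "sg s R = 0")
      case False
      thus ?thesis using \<open>sg s R \<le> 0\<close> sg_tri[OF r s oR] by simp
    next
      case True
      then obtain w where R: "R = (w,-w,0)" and w: "w \<noteq> 0" using olike_form[OF r s oR] by metis
      have "det3 P (w,-w,0) Q = 0" using dt det3_swap23[of P R Q] R by simp
      hence "(snd (snd Q) = 0 \<and> fst Q + fst (snd Q) = 0) \<or> triangle_pt r s Q"
        using col_tri[OF r s tP oQ w] by simp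
      moreover have "snd (snd Q) = 0 \<and> fst Q + fst (snd Q) = 0 \<Longrightarrow> sg s Q = 0"
        by (cases Q) (simp add: sg_def)
      ultimately show ?thesis using nQ sQ' by auto
    qed
  qed
qed


lemma lemN:
  assumes r: "r > 0" and s: "s > 0" and tP: "triangle_pt r s (p1,p2,p3)"
    and d: "(d1,d2) \<noteq> (0,0)" and F: "cubicF r s (d1,d2,0) = 0"
    and pl: "pol r s (d1,d2,0) (p1,p2,p3) = 0"
  shows False
proof -
  have tf: "p3 \<noteq> 0" "p1*p3 > 0" "p2*p3 > 0" "(p1+p2-s*p3)*p3 < 0"
    using tri_facts[OF r s tP] by auto
  have p1: "p1 \<noteq> 0" and p2: "p2 \<noteq> 0" and p12: "p1+p2-s*p3 \<noteq> 0" using tf by auto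
  have "d1*d2*(d1+d2) = 0" using F unfolding cubicF_def by (simp add: power2_eq_square algebra_simps)
  hence "d2 = 0 \<or> d1 = 0 \<or> d2 = -d1" by auto
  moreover have pe: "(-2*d1*d2 - d2^2)*p1 + (-(d1^2) - 2*d1*d2)*p2 + s*d1*d2*p3 = 0"
    using pl unfolding pol_def grad_def dot_def by (simp add: algebra_simps)
  ultimately show False
  proof (elim disjE)
    assume "d2 = 0"
    hence "d1^2*p2 = 0" "d1 \<noteq> 0" using pe d by auto
    thus False using p2 by simp
  next
    assume "d1 = 0"
    hence "d2^2*p1 = 0" "d2 \<noteq> 0" using pe d by auto
    thus False using p1 by simp
  next
    assume h: "d2 = -d1"
    hence "d1^2*(p1+p2-s*p3) = 0" using pe by (simp add: power2_eq_square algebra_simps)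
    moreover have "d1 \<noteq> 0" using h d by auto
    ultimately show False using p12 by simp
  qed
qed

lemma lemL:
  assumes r: "r > 0" and s: "s > 0" and tP: "triangle_pt r s (p1,p2,p3)"
    and c: "cross (p1,p2,p3) (q1,q2,q3) \<noteq> (0,0,0)"
    and h1: "pol r s (p1,p2,p3) (q1,q2,q3) = 0" and h2: "pol r s (q1,q2,q3) (p1,p2,p3) = 0"
    and h3: "cubicF r s (q1,q2,q3) = 0"
  shows False
proof -
  have FP: "cubicF r s (p1,p2,p3) = 0" using tP by (simp add: triangle_pt_def on_curve_def)
  have p3: "p3 \<noteq> 0" using tri_facts[OF r s tP] by auto
  define d1 where "d1 = (-q3)*p1 + p3*q1"
  define d2 where "d2 = (-q3)*p2 + p3*q2"
  have d3: "(-q3)*p3 + p3*q3 = 0" by simp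
  have "cubicF r s (d1,d2,0) = 0"
    using expand3[of r s "-q3" p1 p3 q1 p2 q2 p3 q3] FP h1 h2 h3
    unfolding d1_def d2_def d3 by simp
  moreover have "pol r s (d1,d2,0) (p1,p2,p3) = 0"
    using expand_pol[of r s "-q3" p1 p3 q1 p2 q2 p3 q3] FP h1 h2
    unfolding d1_def d2_def d3 by simp
  moreover have "(d1,d2) \<noteq> (0,0)"
  proof
    assume "(d1,d2) = (0,0)"
    hence z1: "d1 = 0" and z2: "d2 = 0" by auto
    have e1: "p2*q3 - p3*q2 = 0" using z2 by (simp add: d2_def algebra_simps)
    have e2: "p3*q1 - p1*q3 = 0" using z1 by (simp add: d1_def algebra_simps)
    have "p3*(p1*q2 - p2*q1) = p1*d2 - p2*d1" by (simp add: d1_def d2_def algebra_simps)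
    hence "p1*q2 - p2*q1 = 0" using z1 z2 p3 by simp
    thus False using c e1 e2 by (simp add: cross_def)
  qed
  ultimately show False using lemN[OF r s tP] by blast
qed


lemma grad_nz:
  assumes r: "r > 0" and s: "s > 0" and s27: "s^2 > 27*r^2" and tP: "triangle_pt r s (p1,p2,p3)"
  shows "grad r s (p1,p2,p3) \<noteq> (0,0,0)"
proof
  assume g: "grad r s (p1,p2,p3) = (0,0,0)"
  from tP have z: "p3 \<noteq> 0" and a0: "p1/p3 > 0" and b0: "p2/p3 > 0"
    by (auto simp: triangle_pt_def)
  define a where "a = p1/p3"
  define b where "b = p2/p3"
  have a: "a > 0" and b: "b > 0" using a0 b0 by (simp_all add: a_def b_def)
  have xa: "p1 = a*p3" and yb: "p2 = b*p3" using z by (auto simp: a_def b_def)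
  have zz: "p3*p3 \<noteq> 0" using z by simp
  have g1: "(p3*p3)*(b*(s - 2*a - b)) = 0" using g
    by (simp add: grad_def xa yb power2_eq_square algebra_simps)
  have g2: "(p3*p3)*(a*(s - a - 2*b)) = 0" using g
    by (simp add: grad_def xa yb power2_eq_square algebra_simps)
  have g3': "s*p1*p2 - 3*s*r^2*p3^2 = 0" using g by (simp add: grad_def)
  have "(p3*p3)*(s*(a*b - 3*r^2)) = s*p1*p2 - 3*s*r^2*p3^2"
    by (simp add: xa yb power2_eq_square algebra_simps)
  hence g3: "(p3*p3)*(s*(a*b - 3*r^2)) = 0" using g3' by simp
  have e1: "s = 2*a + b" using g1 zz b by simp
  have e2: "s = a + 2*b" using g2 zz a by simp
  have e3: "a*b = 3*r^2" using g3 zz s by simp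
  have ab: "a = b" using e1 e2 by simp
  have "s^2 = 9*(a*b)" using e1 ab by (simp add: power2_eq_square algebra_simps)
  thus False using e3 s27 by simp
qed

lemma euler: "dot (p1,p2,p3) (grad r s (p1,p2,p3)) = 3*cubicF r s (p1,p2,p3)"
  unfolding dot_def grad_def cubicF_def by (simp add: power2_eq_square power3_eq_cube algebra_simps)

lemma cross_cross: "cross P (cross G P) =
   padd (pscale (dot P P) G) (pscale (- dot P G) P)"
  by (cases P, cases G) (simp add: cross_def padd_def pscale_def dot_def algebra_simps)

lemma dot_cross: "dot G (cross G P) = 0"
  by (cases P, cases G) (simp add: cross_def dot_def algebra_simps)


lemma exists_tp:
  assumes r: "r > 0" and s: "s > 0" and s27: "s^2 > 27*r^2"
    and tP: "triangle_pt r s P" and oQ: "on_curve r s Q"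
  shows "\<exists>R. third_point r s P Q R"
proof -
  obtain p1 p2 p3 where P: "P = (p1,p2,p3)" by (cases P) auto
  obtain q1 q2 q3 where Q: "Q = (q1,q2,q3)" by (cases Q) auto
  have tP': "triangle_pt r s (p1,p2,p3)" using tP P by simp
  have FP: "cubicF r s (p1,p2,p3) = 0" using tP' by (simp add: triangle_pt_def on_curve_def)
  have FQ: "cubicF r s (q1,q2,q3) = 0" using oQ by (simp add: Q on_curve_def)
  have p3: "p3 \<noteq> 0" using tri_facts[OF r s tP'] by auto
  show ?thesis
  proof (cases "cross (p1,p2,p3) (q1,q2,q3) = (0,0,0)")
    case False
    define c21 where "c21 = pol r s (p1,p2,p3) (q1,q2,q3)"
    define c12 where "c12 = pol r s (q1,q2,q3) (p1,p2,p3)"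
    have nz: "(-c12, c21) \<noteq> (0,0)"
      using lemL[OF r s tP' False _ _ FQ] by (auto simp: c21_def c12_def)
    have "third_point r s P Q (padd (pscale (-c12) P) (pscale c21 Q))"
      unfolding third_point_def
      apply (rule exI[of _ P], rule exI[of _ Q], rule exI[of _ "-1"], rule exI[of _ 1],
             rule exI[of _ 0], rule exI[of _ 0], rule exI[of _ 1], rule exI[of _ "-c12"],
             rule exI[of _ c21])
      using False nz
      apply (simp add: P Q padd_def pscale_def expand3 FP FQ c21_def[symmetric] c12_def[symmetric])
      apply (simp add: algebra_simps power2_eq_square)
      done
    thus ?thesis by blast
  next
    case True
    define k where "k = q3/p3"
    have Qk: "q1 = k*p1" "q2 = k*p2" "q3 = k*p3"
    proof -
      from True have e1: "p2*q3 - p3*q2 = 0" and e2: "p3*q1 - p1*q3 = 0"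
        by (simp_all add: cross_def)
      show "q1 = k*p1" using e2 p3 by (simp add: k_def field_simps)
      show "q2 = k*p2" using e1 p3 by (simp add: k_def field_simps)
      show "q3 = k*p3" using p3 by (simp add: k_def)
    qed
    have k: "k \<noteq> 0" using oQ Qk by (auto simp: Q on_curve_def)
    define g where "g = grad r s (p1,p2,p3)"
    have g: "g \<noteq> (0,0,0)" using grad_nz[OF r s s27 tP'] by (simp add: g_def)
    define v where "v = cross g (p1,p2,p3)"
    obtain v1 v2 v3 where v: "v = (v1,v2,v3)" by (cases v) auto
    have dPP: "dot (p1,p2,p3) (p1,p2,p3) > 0"
    proof -
      have "dot (p1,p2,p3) (p1,p2,p3) = p1^2 + p2^2 + p3^2" by (simp add: dot_def power2_eq_square)
      moreover have "p3^2 > 0" using p3 by simp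
      ultimately show ?thesis by (simp add: add_nonneg_pos)
    qed
    have dPg: "dot (p1,p2,p3) g = 0" using euler FP by (simp add: g_def)
    have cPv: "cross (p1,p2,p3) v \<noteq> (0,0,0)"
    proof
      assume "cross (p1,p2,p3) v = (0,0,0)"
      hence "pscale (dot (p1,p2,p3) (p1,p2,p3)) g = (0,0,0)"
        using cross_cross[of "(p1,p2,p3)" g] dPg
        by (cases g) (simp add: v_def padd_def pscale_def)
      thus False using g dPP by (cases g) (simp add: pscale_def)
    qed
    have pPv: "pol r s (p1,p2,p3) (v1,v2,v3) = 0"
    proof -
      have "dot g v = 0" unfolding v_def by (rule dot_cross)
      thus ?thesis by (simp add: pol_def g_def[symmetric] v)
    qed
    define a3 where "a3 = - cubicF r s (v1,v2,v3)"
    define b3 where "b3 = pol r s (v1,v2,v3) (p1,p2,p3)"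
    have nz: "(a3, b3) \<noteq> (0,0)"
      using lemL[OF r s tP' cPv[unfolded v] pPv] by (auto simp: a3_def b3_def)
    have "third_point r s P Q (padd (pscale a3 P) (pscale b3 v))"
      unfolding third_point_def
      apply (rule exI[of _ P], rule exI[of _ v], rule exI[of _ "1/k"], rule exI[of _ 1],
             rule exI[of _ 0], rule exI[of _ k], rule exI[of _ 0], rule exI[of _ a3],
             rule exI[of _ b3])
      using cPv nz k
      apply (simp add: P Q v Qk padd_def pscale_def expand3 FP pPv b3_def[symmetric] a3_def[symmetric])
      apply (simp add: field_simps power2_eq_square power3_eq_cube a3_def)
      done
    thus ?thesis by blast
  qed
qed


lemma swap_tri: "triangle_pt r s (swap_xy p) \<longleftrightarrow> triangle_pt r s p"
  using cubic_swap[of r s p]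
  by (cases p) (auto simp: triangle_pt_def on_curve_def swap_xy_def)

lemma swap_oc: "on_curve r s (swap_xy p) \<longleftrightarrow> on_curve r s p"
  using cubic_swap[of r s p]
  by (cases p) (auto simp: on_curve_def swap_xy_def)

theorem theorem2:
  fixes r s :: real
  assumes "r > 0" and "s > 3 * sqrt 3 * r"
  shows "(\<forall>P Q. triangle_pt r s P \<and> triangle_pt r s Q \<longrightarrow>
              \<not> triangle_pt r s (cadd r s P Q))
       \<and> (\<forall>P Q. triangle_pt r s P \<and> on_curve r s Q \<and> \<not> triangle_pt r s Q \<longrightarrow>
              triangle_pt r s (cadd r s P Q))
       \<and> (\<forall>Ps. (\<forall>P\<in>set Ps. triangle_pt r s P) \<longrightarrow>
              (triangle_pt r s (csum r s Ps) \<longleftrightarrow> odd (length Ps)))"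
proof -
  have r: "r > 0" using assms(1) .
  have pos: "3 * sqrt 3 * r > 0" using r by simp
  hence s: "s > 0" using assms(2) by linarith
  have "(3 * sqrt 3 * r)^2 < s^2" using assms(2) pos by (simp add: power_strict_mono)
  moreover have "(3 * sqrt 3 * r)^2 = 27*r^2" by (simp add: power_mult_distrib)
  ultimately have s27: "s^2 > 27*r^2" by simp
  have cadd_ex: "\<exists>R. third_point r s P Q R \<and> cadd r s P Q = swap_xy R"
    if "triangle_pt r s P" "on_curve r s Q" for P Q
  proof -
    have "\<exists>R. third_point r s P Q R" using exists_tp[OF r s s27 that] .
    hence "third_point r s P Q (SOME R. third_point r s P Q R)" by (rule someI_ex)
    thus ?thesis unfolding cadd_def by blast
  qed
  have A: "\<not> triangle_pt r s (cadd r s P Q)" if "triangle_pt r s P" "triangle_pt r s Q" for P Q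
  proof -
    note h = that
    have "on_curve r s Q" using h(2) by (simp add: triangle_pt_def)
    then obtain R where "third_point r s P Q R" "cadd r s P Q = swap_xy R"
      using cadd_ex[OF h(1)] by blast
    thus ?thesis using part1[OF r s h] swap_tri by metis
  qed
  have B: "triangle_pt r s (cadd r s P Q) \<and> on_curve r s (cadd r s P Q)"
    if h: "triangle_pt r s P" "on_curve r s Q" "\<not> triangle_pt r s Q" for P Q
  proof -
    obtain R where "third_point r s P Q R" "cadd r s P Q = swap_xy R"
      using cadd_ex[OF h(1,2)] by blast
    thus ?thesis using part2[OF r s h] swap_tri swap_oc tp_oncurve by metis
  qed
  have C: "on_curve r s (cadd r s P Q)" if "triangle_pt r s P" "on_curve r s Q" for P Q
  proof -
    note h = that
    obtain R where "third_point r s P Q R" "cadd r s P Q = swap_xy R"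
      using cadd_ex[OF h(1,2)] by blast
    thus ?thesis using swap_oc tp_oncurve by metis
  qed
  have D: "on_curve r s (csum r s Ps) \<and> (triangle_pt r s (csum r s Ps) \<longleftrightarrow> odd (length Ps))"
    if "\<forall>P\<in>set Ps. triangle_pt r s P" for Ps
    using that
  proof (induction Ps)
    case Nil
    have "on_curve r s czero" by (simp add: on_curve_def czero_def cubicF_def)
    moreover have "\<not> triangle_pt r s czero" by (simp add: triangle_pt_def czero_def)
    ultimately show ?case by (simp add: csum_def)
  next
    case (Cons P Ps)
    have tP: "triangle_pt r s P" using Cons.prems by simp
    have IH: "on_curve r s (csum r s Ps) \<and> (triangle_pt r s (csum r s Ps) \<longleftrightarrow> odd (length Ps))"
      using Cons by simp
    have eq: "csum r s (P#Ps) = cadd r s P (csum r s Ps)" by (simp add: csum_def)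
    show ?case
    proof (cases "triangle_pt r s (csum r s Ps)")
      case True
      thus ?thesis using A[OF tP True] C[OF tP] IH eq by simp
    next
      case False
      thus ?thesis using B[OF tP _ False] IH eq by simp
    qed
  qed
  show ?thesis using A B D by blast
qed

end
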